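(* Let $p\geq 1$ be an integer, $\alpha>0$, and let $\lambda\in\mathbb{C}$, $\lambda\neq 0$. Consider an explicit time-marching scheme whose stability region contains the real segment $[-C,0]$, where $C>0$ is the largest value such that the scheme applied to $dy/dt=\mu y$ with real $\mu<0$ is stable whenever $|\mu\Delta t|\leq C$. If $\alpha\geq\alpha_{\min}=(2^p-1)/C$, then the explicit time integration of $dy/dt=T^{(p)}_{\lambda}(\alpha,\Delta t)\,\lambda\, y$ with this scheme remains stable in the limit of very large time steps: the modified dimensionless eigenvalue satisfies $$\left(T^{(p)}_\lambda(\alpha,\Delta t)\lambda\right)\Delta t=-\frac{2^p-1}{\alpha}+\mathcal{O}(\Delta t^{-1})\quad(\Delta t\to\infty),$$ so that in this limit $-C\leq \left(T^{(p)}_\lambda(\alpha,\Delta t)\lambda\right)\Delta t<0$ lies on the negative real axis within the stability region of the scheme.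
   Context: For $\Delta t>0$, $\alpha>0$ and $\lambda\in\mathbb{C}$ (whenever the inverses exist), the TASE operator of order $p$ is defined recursively by $T^{(1)}_\lambda(\alpha,\Delta t)=(1-\alpha\Delta t\lambda)^{-1}$ and, for $p\geq 2$, $$T^{(p)}_\lambda(\alpha,\Delta t)=\frac{2^{p-1}T^{(p-1)}_\lambda(\alpha/2,\Delta t)-T^{(p-1)}_\lambda(\alpha,\Delta t)}{2^{p-1}-1}.$$ Equivalently $T^{(p)}_\lambda(\alpha,\Delta t)=\sum_{k=0}^{p-1}\beta_{p,k}(2^k-\alpha\Delta t\lambda)^{-1}$ for suitable rational constants $\beta_{p,k}$. The stability region of an explicit scheme is the set of $z=\mu\Delta t\in\mathbb{C}$ for which the scheme applied to $dy/dt=\mu y$ has amplification factor of modulus at most $1$. *)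

theory Defs
  imports "HOL-Analysis.Analysis" "HOL-Computational_Algebra.Polynomial" "HOL-Library.Landau_Symbols"
begin

text \<open>TASE operator of order p (p >= 1), arguments: alpha, Delta t, lambda.
  Order 0 is not used (set to 0). Division by zero yields 0 by HOL convention,
  which only matters at finitely many Delta t.\<close>
fun tase :: "nat \<Rightarrow> real \<Rightarrow> real \<Rightarrow> complex \<Rightarrow> complex" where
  "tase 0 a dt l = 0"
| "tase (Suc 0) a dt l = inverse (1 - complex_of_real (a * dt) * l)"
| "tase (Suc (Suc n)) a dt l =
     (2 ^ (Suc n) * tase (Suc n) (a / 2) dt l - tase (Suc n) a dt l) / (2 ^ (Suc n) - 1)"

text \<open>Stability region of an explicit one-step scheme with amplification factor R
  (R z is the factor for dy/dt = mu y with z = mu * Delta t).\<close>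
definition stability_region :: "(complex \<Rightarrow> complex) \<Rightarrow> complex set" where
  "stability_region R = {z. cmod (R z) \<le> 1}"

end

theory Submission
  imports Defs
begin

lemma base_pt:
  fixes a dt :: real and l :: complex
  assumes a: "a > 0" and l: "l \<noteq> 0" and elim: "dt \<ge> 2 / (a * cmod l)"
  shows "cmod (tase 1 a dt l * l * complex_of_real dt - complex_of_real (- (2 ^ 1 - 1) / a))
        \<le> 2 / (a^2 * cmod l) * cmod (complex_of_real (1 / dt))"
proof -
    have lpos: "cmod l > 0" using l by simp
    have "2 / (a * cmod l) > 0" using a lpos by simp
    hence dtpos: "dt > 0" using elim by linarith
    have k: "a * cmod l * dt \<ge> 2" using elim a lpos
      by (simp add: divide_le_eq mult.commute)
    have "cmod (complex_of_real (a*dt) * l) = a * cmod l * dt"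
      using a dtpos by (simp add: norm_mult)
    moreover have "cmod (1 - complex_of_real (a*dt) * l) \<ge> cmod (complex_of_real (a*dt) * l) - 1"
      using norm_triangle_ineq2[of "complex_of_real (a*dt) * l" 1] by (simp add: norm_minus_commute)
    ultimately have nb: "cmod (1 - complex_of_real (a*dt) * l) \<ge> a * cmod l * dt / 2"
      using k by linarith
    have nz: "1 - complex_of_real (a*dt) * l \<noteq> 0"
      using nb k by auto
    have an: "complex_of_real a \<noteq> 0" using a by simp
    have t1: "tase 1 a dt l = inverse (1 - complex_of_real (a*dt) * l)"
      by (simp add: numeral_eq_Suc)
    have eq: "tase 1 a dt l * l * complex_of_real dt - complex_of_real (- (2 ^ 1 - 1) / a)
        = 1 / (complex_of_real a * (1 - complex_of_real (a*dt) * l))"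
      unfolding t1 using nz an
      by (simp add: field_simps)
    have "cmod (1 / (complex_of_real a * (1 - complex_of_real (a*dt) * l)))
        = 1 / (a * cmod (1 - complex_of_real (a*dt) * l))"
      using a by (simp add: norm_divide norm_mult)
    also have "\<dots> \<le> 1 / (a * (a * cmod l * dt / 2))"
    proof -
      have p: "0 < a * (a * cmod l * dt / 2)" using a lpos dtpos by simp
      have q: "a * (a * cmod l * dt / 2) \<le> a * cmod (1 - complex_of_real (a*dt) * l)"
        using nb a by simp
      have r: "0 < a * cmod (1 - complex_of_real (a*dt) * l)" using p q by linarith
      show ?thesis by (rule divide_left_mono[OF q zero_le_one mult_pos_pos[OF r p]])
    qed
    also have "\<dots> = 2 / (a^2 * cmod l) * cmod (complex_of_real (1 / dt))"
      proof -
      have "cmod (complex_of_real (1 / dt)) = 1 / dt" using dtpos by (simp del: of_real_divide)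
      then show ?thesis using dtpos a lpos by (simp add: power2_eq_square)
    qed
    finally show ?thesis using eq by simp
qed
lemma base_bigo:
  fixes a :: real and l :: complex
  assumes a: "a > 0" and l: "l \<noteq> 0"
  shows "(\<lambda>dt. tase 1 a dt l * l * complex_of_real dt - complex_of_real (- (2 ^ 1 - 1) / a))
           \<in> O[at_top](\<lambda>dt. complex_of_real (1 / dt))"
proof (rule bigoI[where c = "2 / (a^2 * cmod l)"])
  have ev: "eventually (\<lambda>dt. dt \<ge> 2 / (a * cmod l)) at_top"
    by (rule eventually_ge_at_top)
  then show "eventually (\<lambda>dt. cmod (tase 1 a dt l * l * complex_of_real dt - complex_of_real (- (2 ^ 1 - 1) / a))
        \<le> 2 / (a^2 * cmod l) * cmod (complex_of_real (1 / dt))) at_top"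
    by (rule eventually_mono) (rule base_pt[OF a l])
qed

lemma alg_id:
  fixes Q A B l d al :: complex
  assumes "Q - 1 \<noteq> 0" "al \<noteq> 0"
  shows "(Q*A - B)/(Q-1) * l * d - (- (2*Q - 1) / al)
      = Q/(Q-1) * (A * l * d - (- (Q - 1) / (al / 2)))
        - 1/(Q-1) * (B * l * d - (- (Q - 1) / al))"
proof -
  define D where "D = Q - 1"
  have D: "D \<noteq> 0" using assms(1) unfolding D_def .
  have QD: "Q = D + 1" unfolding D_def by simp
  have "((D+1)*A - B)/D * l * d - (- (2*(D+1) - 1) / al)
      = (D+1)/D * (A * l * d - (- D / (al / 2)))
        - 1/D * (B * l * d - (- D / al))"
    using D assms(2) by (simp add: field_simps)
  then show ?thesis unfolding QD by simp
qed

lemma main_bigo: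
  fixes l :: complex
  assumes l: "l \<noteq> 0"
  shows "\<And>a. a > 0 \<Longrightarrow> (\<lambda>dt. tase (Suc n) a dt l * l * complex_of_real dt - complex_of_real (- (2 ^ Suc n - 1) / a))
           \<in> O[at_top](\<lambda>dt. complex_of_real (1 / dt))"
proof (induction n)
  case 0
  then show ?case using base_bigo[OF _ l] by simp
next
  case (Suc n a)
  define q :: real where "q = 2 ^ Suc n"
  have q1: "q - 1 \<noteq> 0" using one_less_power[of "2::real" "Suc n"] unfolding q_def by linarith
  define f where "f = (\<lambda>b dt. tase (Suc n) b dt l * l * complex_of_real dt - complex_of_real (- (2 ^ Suc n - 1) / b))"
  have h1: "f (a/2) \<in> O[at_top](\<lambda>dt. complex_of_real (1 / dt))"
    unfolding f_def by (rule Suc.IH) (use Suc.prems in simp)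
  have h2: "f a \<in> O[at_top](\<lambda>dt. complex_of_real (1 / dt))"
    unfolding f_def by (rule Suc.IH) (use Suc.prems in simp)
  have h: "(\<lambda>dt. complex_of_real (q / (q - 1)) * f (a/2) dt - complex_of_real (1 / (q-1)) * f a dt)
      \<in> O[at_top](\<lambda>dt. complex_of_real (1 / dt))"
  proof -
    have g1: "(\<lambda>dt. complex_of_real (q / (q - 1)) * f (a/2) dt) \<in> O[at_top](\<lambda>dt. complex_of_real (1 / dt))"
      by (subst cmult_in_bigo_iff) (rule disjI2, rule h1)
    have g2: "(\<lambda>dt. complex_of_real (1 / (q - 1)) * f a dt) \<in> O[at_top](\<lambda>dt. complex_of_real (1 / dt))"
      by (subst cmult_in_bigo_iff) (rule disjI2, rule h2)
    show ?thesis by (rule sum_in_bigo(2)[OF g1 g2])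
  qed
  have "(\<lambda>dt. tase (Suc (Suc n)) a dt l * l * complex_of_real dt - complex_of_real (- (2 ^ Suc (Suc n) - 1) / a))
     = (\<lambda>dt. complex_of_real (q / (q - 1)) * f (a/2) dt - complex_of_real (1 / (q-1)) * f a dt)"
  proof
    fix dt
    define Q where "Q = complex_of_real q"
    define A where "A = tase (Suc n) (a/2) dt l"
    define B where "B = tase (Suc n) a dt l"
    have qc: "(2::complex) ^ Suc n = Q" unfolding q_def Q_def by simp
    have q1c: "Q - 1 \<noteq> 0" using q1 unfolding Q_def
      by (metis of_real_1 of_real_diff of_real_eq_0_iff)
    have an: "complex_of_real a \<noteq> 0" using Suc.prems by simp
    have e1: "tase (Suc (Suc n)) a dt l = (Q*A - B)/(Q-1)"
      unfolding A_def B_def by (subst tase.simps(3)) (simp only: qc)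
    have e2: "complex_of_real (- (2 ^ Suc (Suc n) - 1) / a) = - (2*Q - 1) / complex_of_real a"
      unfolding Q_def q_def by simp
    have e3: "complex_of_real (- (2 ^ Suc n - 1) / (a/2)) = - (Q - 1) / (complex_of_real a / 2)"
      unfolding Q_def q_def by simp
    have e4: "complex_of_real (- (2 ^ Suc n - 1) / a) = - (Q - 1) / complex_of_real a"
      unfolding Q_def q_def by simp
    have e5: "complex_of_real (q / (q - 1)) = Q / (Q - 1)" "complex_of_real (1 / (q - 1)) = 1 / (Q - 1)"
      unfolding Q_def by simp_all
    have alg: "(Q*A - B)/(Q-1) * l * complex_of_real dt - (- (2*Q - 1) / complex_of_real a)
      = Q/(Q-1) * (A * l * complex_of_real dt - (- (Q - 1) / (complex_of_real a / 2)))
        - 1/(Q-1) * (B * l * complex_of_real dt - (- (Q - 1) / complex_of_real a))"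
      by (rule alg_id[OF q1c an])
    show "tase (Suc (Suc n)) a dt l * l * complex_of_real dt - complex_of_real (- (2 ^ Suc (Suc n) - 1) / a)
     = complex_of_real (q / (q - 1)) * f (a/2) dt - complex_of_real (1 / (q-1)) * f a dt"
      unfolding f_def e1 e2 e3 e4 e5 A_def[symmetric] B_def[symmetric] by (rule alg)
  qed
  then show ?case using h by simp
qed

theorem theorem1:
  fixes p :: nat and alpha C :: real and lam :: complex and R :: "complex \<Rightarrow> complex"
  assumes p: "p \<ge> 1"
    and alpha_pos: "alpha > 0"
    and lam: "lam \<noteq> 0"
    and explicit: "\<exists>P. R = poly P"
    and C_pos: "C > 0"
    and seg: "\<forall>x\<in>{-C..0}. complex_of_real x \<in> stability_region R"
    and C_largest: "\<forall>c>C. \<not> (\<forall>x\<in>{-c..<0}. complex_of_real x \<in> stability_region R)"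
    and alpha_min: "alpha \<ge> (2 ^ p - 1) / C"
  shows "(\<lambda>dt. tase p alpha dt lam * lam * complex_of_real dt - complex_of_real (- (2 ^ p - 1) / alpha))
           \<in> O[at_top](\<lambda>dt. complex_of_real (1 / dt))
    \<and> ((\<lambda>dt. tase p alpha dt lam * lam * complex_of_real dt)
           \<longlongrightarrow> complex_of_real (- (2 ^ p - 1) / alpha)) at_top
    \<and> - C \<le> - (2 ^ p - 1) / alpha \<and> - (2 ^ p - 1) / alpha < 0
    \<and> complex_of_real (- (2 ^ p - 1) / alpha) \<in> stability_region R"
proof -
  obtain n where pn: "p = Suc n" using p by (cases p) auto
  have B: "(\<lambda>dt. tase p alpha dt lam * lam * complex_of_real dt - complex_of_real (- (2 ^ p - 1) / alpha))
           \<in> O[at_top](\<lambda>dt. complex_of_real (1 / dt))"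
    using main_bigo[OF lam alpha_pos] pn by simp
  have T: "((\<lambda>dt. tase p alpha dt lam * lam * complex_of_real dt)
           \<longlongrightarrow> complex_of_real (- (2 ^ p - 1) / alpha)) at_top"
  proof -
    obtain c where c: "c > 0" and ev: "eventually (\<lambda>dt. cmod (tase p alpha dt lam * lam * complex_of_real dt - complex_of_real (- (2 ^ p - 1) / alpha))
        \<le> c * cmod (complex_of_real (1 / dt))) at_top"
      using B by (elim landau_o.bigE) auto
    have i0: "((\<lambda>x::real. inverse x) \<longlongrightarrow> 0) at_top"
      by (rule tendsto_inverse_0_at_top[OF filterlim_ident])
    have "((\<lambda>dt. c * cmod (complex_of_real (1 / dt))) \<longlongrightarrow> c * 0) at_top"
    proof -
      have i1: "((\<lambda>x. complex_of_real (1/x)) \<longlongrightarrow> 0) at_top"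
        using tendsto_of_real[OF i0, where 'a=complex] by (simp add: divide_inverse)
      have i2: "((\<lambda>dt. cmod (complex_of_real (1/dt))) \<longlongrightarrow> 0) at_top"
        by (rule tendsto_norm_zero[OF i1])
      show ?thesis by (rule tendsto_mult_left[OF i2])
    qed
    have "((\<lambda>dt. tase p alpha dt lam * lam * complex_of_real dt - complex_of_real (- (2 ^ p - 1) / alpha)) \<longlongrightarrow> 0) at_top"
      by (rule Lim_null_comparison[OF ev]) (use \<open>((\<lambda>dt. c * cmod (complex_of_real (1 / dt))) \<longlongrightarrow> c * 0) at_top\<close> in simp)
    then show ?thesis by (subst Lim_null) assumption
  qed
  have g1: "(2::real) ^ p > 1" using p by (simp add: one_less_power)
  have le: "(2 ^ p - 1) / alpha \<le> C"
    using alpha_min alpha_pos C_pos by (simp add: field_simps)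
  have m: "- (2 ^ p - 1) / alpha = - ((2 ^ p - 1) / alpha)" by (simp only: minus_divide_left)
  have le2: "- C \<le> - (2 ^ p - 1) / alpha" using le m by linarith
  have neg: "- (2 ^ p - 1) / alpha < 0" using g1 alpha_pos by (simp add: divide_neg_pos)
  have "complex_of_real (- (2 ^ p - 1) / alpha) \<in> stability_region R"
  proof -
    have "- (2 ^ p - 1) / alpha \<in> {-C..0}" unfolding atLeastAtMost_iff using le2 neg less_imp_le by blast
    then show ?thesis using seg by blast
  qed
  then show ?thesis using B T le2 neg by blast
qed

end
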